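(* Let $A$ and $B$ be rings, $f : A \to B$ a ring homomorphism and $J$ a proper ideal of $B$. Assume that $f(\mathrm{Reg}(A)) \subseteq \mathrm{Reg}(B)$. If $A \bowtie^f J$ is a Prüfer ring, then $A$ is a Prüfer ring.
   Context: All rings are commutative with identity. For a ring homomorphism $f:A\to B$ and an ideal $J$ of $B$, $A \bowtie^f J := \{(a, f(a)+j) : a \in A, j \in J\}$, a subring of $A\times B$. $\mathrm{Reg}(R)$ is the set of regular elements (non-zero-divisors) of $R$. An ideal is regular if it contains a regular element. A ring $R$ is a Prüfer ring if every finitely generated regular ideal of $R$ is invertible. *)

theory Defs
  imports "HOL-Algebra.Algebra" "HOL-Algebra.Chinese_Remainder"
begin

definition regs :: "('a, 'm) ring_scheme \<Rightarrow> 'a set" where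
  "regs R = {r \<in> carrier R. \<forall>x \<in> carrier R. r \<otimes>\<^bsub>R\<^esub> x = \<zero>\<^bsub>R\<^esub> \<longrightarrow> x = \<zero>\<^bsub>R\<^esub>}"

section \<open>Total ring of fractions Q(R): classes of pairs (a,s), s regular\<close>

definition frac_rel :: "('a, 'm) ring_scheme \<Rightarrow> (('a \<times> 'a) \<times> ('a \<times> 'a)) set" where
  "frac_rel R = {((a, s), (b, t)). a \<in> carrier R \<and> b \<in> carrier R \<and> s \<in> regs R \<and> t \<in> regs R
                  \<and> a \<otimes>\<^bsub>R\<^esub> t = b \<otimes>\<^bsub>R\<^esub> s}"

definition frac :: "('a, 'm) ring_scheme \<Rightarrow> 'a \<Rightarrow> 'a \<Rightarrow> ('a \<times> 'a) set" where
  "frac R a s = frac_rel R `` {(a, s)}"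

definition fracs :: "('a, 'm) ring_scheme \<Rightarrow> ('a \<times> 'a) set set" where
  "fracs R = (carrier R \<times> regs R) // frac_rel R"

definition qadd :: "('a, 'm) ring_scheme \<Rightarrow> ('a \<times> 'a) set \<Rightarrow> ('a \<times> 'a) set \<Rightarrow> ('a \<times> 'a) set" where
  "qadd R U V = (let p = (SOME p. p \<in> U); q = (SOME q. q \<in> V)
                 in frac R ((fst p \<otimes>\<^bsub>R\<^esub> snd q) \<oplus>\<^bsub>R\<^esub> (fst q \<otimes>\<^bsub>R\<^esub> snd p)) (snd p \<otimes>\<^bsub>R\<^esub> snd q))"

definition qmul :: "('a, 'm) ring_scheme \<Rightarrow> ('a \<times> 'a) set \<Rightarrow> ('a \<times> 'a) set \<Rightarrow> ('a \<times> 'a) set" where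
  "qmul R U V = (let p = (SOME p. p \<in> U); q = (SOME q. q \<in> V)
                 in frac R (fst p \<otimes>\<^bsub>R\<^esub> fst q) (snd p \<otimes>\<^bsub>R\<^esub> snd q))"

definition canon :: "('a, 'm) ring_scheme \<Rightarrow> 'a \<Rightarrow> ('a \<times> 'a) set" where
  "canon R a = frac R a \<one>\<^bsub>R\<^esub>"

definition qsum :: "('a, 'm) ring_scheme \<Rightarrow> ('a \<times> 'a) set list \<Rightarrow> ('a \<times> 'a) set" where
  "qsum R xs = foldr (qadd R) xs (canon R \<zero>\<^bsub>R\<^esub>)"

definition frac_submodule :: "('a, 'm) ring_scheme \<Rightarrow> ('a \<times> 'a) set set \<Rightarrow> bool" where
  "frac_submodule R M \<longleftrightarrow> M \<subseteq> fracs R \<and> canon R \<zero>\<^bsub>R\<^esub> \<in> M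
     \<and> (\<forall>x \<in> M. \<forall>y \<in> M. qadd R x y \<in> M)
     \<and> (\<forall>r \<in> carrier R. \<forall>x \<in> M. qmul R (canon R r) x \<in> M)"

definition ideal_frac_prod :: "('a, 'm) ring_scheme \<Rightarrow> 'a set \<Rightarrow> ('a \<times> 'a) set set \<Rightarrow> ('a \<times> 'a) set set" where
  "ideal_frac_prod R I M =
     {qsum R (map (\<lambda>(i, x). qmul R (canon R i) x) ps) | ps. set ps \<subseteq> I \<times> M}"

definition invertible_ideal :: "('a, 'm) ring_scheme \<Rightarrow> 'a set \<Rightarrow> bool" where
  "invertible_ideal R I \<longleftrightarrow> (\<exists>M. frac_submodule R M \<and> ideal_frac_prod R I M = canon R ` carrier R)"

definition prufer_ring :: "('a, 'm) ring_scheme \<Rightarrow> bool" where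
  "prufer_ring R \<longleftrightarrow> (\<forall>I. ideal I R \<and> (\<exists>S. finite S \<and> S \<subseteq> carrier R \<and> I = genideal R S)
        \<and> I \<inter> regs R \<noteq> {} \<longrightarrow> invertible_ideal R I)"

definition amalg :: "('a, 'm) ring_scheme \<Rightarrow> ('b, 'n) ring_scheme \<Rightarrow> ('a \<Rightarrow> 'b) \<Rightarrow> 'b set \<Rightarrow> ('a \<times> 'b) ring" where
  "amalg A B f J = (RDirProd A B)\<lparr>carrier := {(a, f a \<oplus>\<^bsub>B\<^esub> j) | a j. a \<in> carrier A \<and> j \<in> J}\<rparr>"

end

theory Submission
  imports Defs
begin


context cring
begin

lemma regs_carrier: "s \<in> regs R \<Longrightarrow> s \<in> carrier R"
  by (simp add: regs_def)

lemma regs_cancel: "s \<in> regs R \<Longrightarrow> x \<in> carrier R \<Longrightarrow> s \<otimes> x = \<zero> \<Longrightarrow> x = \<zero>"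
  by (simp add: regs_def)

lemma one_regs: "\<one> \<in> regs R"
  by (simp add: regs_def)

lemma mult_regs: assumes "s \<in> regs R" "t \<in> regs R" shows "s \<otimes> t \<in> regs R"
proof -
  have s: "s \<in> carrier R" and t: "t \<in> carrier R" using assms by (auto simp: regs_def)
  show ?thesis unfolding regs_def
  proof (intro CollectI conjI ballI impI)
    show "s \<otimes> t \<in> carrier R" using s t by simp
    fix x assume x: "x \<in> carrier R" and e: "s \<otimes> t \<otimes> x = \<zero>"
    have "s \<otimes> (t \<otimes> x) = \<zero>" using e s t x by (simp add: m_assoc)
    hence "t \<otimes> x = \<zero>" using regs_cancel[OF assms(1)] t x by simp
    thus "x = \<zero>" using regs_cancel[OF assms(2)] x by simp
  qed
qed

lemma cancel_regs: assumes "t \<in> regs R" "x \<in> carrier R" "y \<in> carrier R" "x \<otimes> t = y \<otimes> t"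
  shows "x = y"
proof -
  have t: "t \<in> carrier R" using assms regs_carrier by auto
  have e: "t \<otimes> x = t \<otimes> y" using assms t by (simp add: m_comm)
  have "t \<otimes> (x \<ominus> y) = t \<otimes> x \<oplus> \<ominus> (t \<otimes> y)" using assms t
    by (simp add: r_distr minus_eq r_minus)
  also have "\<dots> = \<zero>" using e t assms by (simp add: r_neg)
  finally have "t \<otimes> (x \<ominus> y) = \<zero>" .
  hence "x \<ominus> y = \<zero>" using regs_cancel[OF assms(1)] assms by simp
  thus ?thesis using assms by simp
qed

lemma frac_equiv: "equiv (carrier R \<times> regs R) (frac_rel R)"
proof (rule equivI)
  show "refl_on (carrier R \<times> regs R) (frac_rel R)"
  proof (rule refl_onI)
    fix x assume "x \<in> carrier R \<times> regs R" thus "(x, x) \<in> frac_rel R"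
      by (cases x) (auto simp: frac_rel_def)
  qed
  show "frac_rel R \<subseteq> (carrier R \<times> regs R) \<times> (carrier R \<times> regs R)"
    unfolding frac_rel_def by auto
  show "sym (frac_rel R)"
    by (auto simp: sym_def frac_rel_def)
  show "trans (frac_rel R)"
  proof (rule transI)
    fix x y z assume xy: "(x, y) \<in> frac_rel R" and yz: "(y, z) \<in> frac_rel R"
    obtain a s where x: "x = (a, s)" by (cases x)
    obtain b t where y: "y = (b, t)" by (cases y)
    obtain c u where z: "z = (c, u)" by (cases z)
    have h: "a \<in> carrier R" "b \<in> carrier R" "c \<in> carrier R" "s \<in> regs R" "t \<in> regs R" "u \<in> regs R"
      "a \<otimes> t = b \<otimes> s" "b \<otimes> u = c \<otimes> t"
      using xy yz x y z by (auto simp: frac_rel_def)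
    have c: "s \<in> carrier R" "t \<in> carrier R" "u \<in> carrier R" using h regs_carrier by auto
    have "(a \<otimes> u) \<otimes> t = (a \<otimes> t) \<otimes> u" using h(1-6) c by (simp add: m_ac)
    also have "\<dots> = (b \<otimes> s) \<otimes> u" using h c by simp
    also have "\<dots> = (b \<otimes> u) \<otimes> s" using h(1-6) c by (simp add: m_ac)
    also have "\<dots> = (c \<otimes> t) \<otimes> s" using h c by simp
    also have "\<dots> = (c \<otimes> s) \<otimes> t" using h(1-6) c by (simp add: m_ac)
    finally have "a \<otimes> u = c \<otimes> s" using cancel_regs[OF h(5)] h c by simp
    thus "(x, z) \<in> frac_rel R" using h x z by (simp add: frac_rel_def)
  qed
qed

lemma frac_eq_iff:
  assumes "a \<in> carrier R" "b \<in> carrier R" "s \<in> regs R" "t \<in> regs R"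
  shows "frac R a s = frac R b t \<longleftrightarrow> a \<otimes> t = b \<otimes> s"
proof -
  have "frac R a s = frac R b t \<longleftrightarrow> ((a, s), (b, t)) \<in> frac_rel R"
    unfolding frac_def by (rule eq_equiv_class_iff[OF frac_equiv]) (use assms in auto)
  thus ?thesis using assms by (simp add: frac_rel_def)
qed

lemma frac_eqI:
  assumes "a \<in> carrier R" "b \<in> carrier R" "s \<in> regs R" "t \<in> regs R" "a \<otimes> t = b \<otimes> s"
  shows "frac R a s = frac R b t"
  using frac_eq_iff assms by blast

lemma frac_in: "a \<in> carrier R \<Longrightarrow> s \<in> regs R \<Longrightarrow> frac R a s \<in> fracs R"
  unfolding frac_def fracs_def by (rule quotientI) simp

lemma fracs_some:
  assumes "U \<in> fracs R"
  shows "(SOME p. p \<in> U) \<in> U \<and> fst (SOME p. p \<in> U) \<in> carrier R \<and> snd (SOME p. p \<in> U) \<in> regs R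
     \<and> U = frac R (fst (SOME p. p \<in> U)) (snd (SOME p. p \<in> U))"
proof -
  define p where "p = (SOME p. p \<in> U)"
  obtain x where x: "x \<in> carrier R \<times> regs R" "U = frac_rel R `` {x}"
    using assms unfolding fracs_def by (auto elim: quotientE)
  have "x \<in> U" using x equiv_class_self[OF frac_equiv] by simp
  hence p: "p \<in> U" unfolding p_def by (rule someI)
  then have xp: "(x, p) \<in> frac_rel R" using x by simp
  hence c: "fst p \<in> carrier R" "snd p \<in> regs R" by (auto simp: frac_rel_def)
  have "frac_rel R `` {x} = frac_rel R `` {p}"
    by (rule equiv_class_eq[OF frac_equiv xp])
  moreover have "frac R (fst p) (snd p) = frac_rel R `` {p}"
    unfolding frac_def by simp
  ultimately have "U = frac R (fst p) (snd p)" using x by simp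
  thus ?thesis using p c unfolding p_def by blast
qed

lemma fracs_cases:
  assumes "U \<in> fracs R"
  obtains a s where "a \<in> carrier R" "s \<in> regs R" "U = frac R a s"
  using fracs_some[OF assms] by blast

lemma frac_some_rep:
  assumes "a \<in> carrier R" "s \<in> regs R"
  obtains a' s' where "(SOME p. p \<in> frac R a s) = (a', s')" "a' \<in> carrier R" "s' \<in> regs R"
    "a' \<otimes> s = a \<otimes> s'"
proof -
  let ?p = "SOME p. p \<in> frac R a s"
  have "?p \<in> frac R a s" "fst ?p \<in> carrier R" "snd ?p \<in> regs R"
    "frac R a s = frac R (fst ?p) (snd ?p)"
    using fracs_some[OF frac_in[OF assms]] by auto
  hence "a \<otimes> snd ?p = fst ?p \<otimes> s" using frac_eq_iff assms by blast
  thus ?thesis using that[of "fst ?p" "snd ?p"] \<open>fst ?p \<in> carrier R\<close> \<open>snd ?p \<in> regs R\<close> by simp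
qed

lemma qmul_frac:
  assumes "a \<in> carrier R" "s \<in> regs R" "b \<in> carrier R" "t \<in> regs R"
  shows "qmul R (frac R a s) (frac R b t) = frac R (a \<otimes> b) (s \<otimes> t)"
proof -
  obtain a' s' where 1: "(SOME p. p \<in> frac R a s) = (a', s')" "a' \<in> carrier R" "s' \<in> regs R"
    "a' \<otimes> s = a \<otimes> s'" using frac_some_rep assms by metis
  obtain b' t' where 2: "(SOME p. p \<in> frac R b t) = (b', t')" "b' \<in> carrier R" "t' \<in> regs R"
    "b' \<otimes> t = b \<otimes> t'" using frac_some_rep assms by metis
  have c: "s \<in> carrier R" "t \<in> carrier R" "s' \<in> carrier R" "t' \<in> carrier R"
    using assms 1 2 regs_carrier by auto
  have "(a' \<otimes> b') \<otimes> (s \<otimes> t) = (a' \<otimes> s) \<otimes> (b' \<otimes> t)" using 1(2,3) 2(2,3) c assms by (simp add: m_ac)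
  also have "\<dots> = (a \<otimes> s') \<otimes> (b \<otimes> t')" using 1 2 by simp
  also have "\<dots> = (a \<otimes> b) \<otimes> (s' \<otimes> t')" using 1(2,3) 2(2,3) c assms by (simp add: m_ac)
  finally have e: "(a' \<otimes> b') \<otimes> (s \<otimes> t) = (a \<otimes> b) \<otimes> (s' \<otimes> t')" .
  show ?thesis unfolding qmul_def Let_def 1 2 fst_conv snd_conv
    by (rule frac_eqI) (use 1 2 assms e in \<open>auto intro: mult_regs\<close>)
qed

lemma qadd_frac:
  assumes "a \<in> carrier R" "s \<in> regs R" "b \<in> carrier R" "t \<in> regs R"
  shows "qadd R (frac R a s) (frac R b t) = frac R (a \<otimes> t \<oplus> b \<otimes> s) (s \<otimes> t)"
proof -
  obtain a' s' where 1: "(SOME p. p \<in> frac R a s) = (a', s')" "a' \<in> carrier R" "s' \<in> regs R"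
    "a' \<otimes> s = a \<otimes> s'" using frac_some_rep assms by metis
  obtain b' t' where 2: "(SOME p. p \<in> frac R b t) = (b', t')" "b' \<in> carrier R" "t' \<in> regs R"
    "b' \<otimes> t = b \<otimes> t'" using frac_some_rep assms by metis
  have c: "s \<in> carrier R" "t \<in> carrier R" "s' \<in> carrier R" "t' \<in> carrier R"
    using assms 1 2 regs_carrier by auto
  have "(a' \<otimes> t' \<oplus> b' \<otimes> s') \<otimes> (s \<otimes> t) = (a' \<otimes> s) \<otimes> (t \<otimes> t') \<oplus> (b' \<otimes> t) \<otimes> (s \<otimes> s')"
    using 1(2,3) 2(2,3) c assms by (simp add: m_ac l_distr r_distr)
  also have "\<dots> = (a \<otimes> s') \<otimes> (t \<otimes> t') \<oplus> (b \<otimes> t') \<otimes> (s \<otimes> s')" using 1 2 by simp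
  also have "\<dots> = (a \<otimes> t \<oplus> b \<otimes> s) \<otimes> (s' \<otimes> t')" using 1(2,3) 2(2,3) c assms by (simp add: m_ac l_distr r_distr)
  finally have e: "(a' \<otimes> t' \<oplus> b' \<otimes> s') \<otimes> (s \<otimes> t) = (a \<otimes> t \<oplus> b \<otimes> s) \<otimes> (s' \<otimes> t')" .
  show ?thesis unfolding qadd_def Let_def 1 2 fst_conv snd_conv
    by (rule frac_eqI) (use 1 2 assms c e in \<open>auto intro: mult_regs\<close>)
qed


lemma canon_in: "r \<in> carrier R \<Longrightarrow> canon R r \<in> fracs R"
  unfolding canon_def by (rule frac_in) (auto intro: one_regs)

lemma canon_inj: "x \<in> carrier R \<Longrightarrow> y \<in> carrier R \<Longrightarrow> canon R x = canon R y \<Longrightarrow> x = y"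
  unfolding canon_def using frac_eq_iff[OF _ _ one_regs one_regs] by simp

lemma qadd_canon: "x \<in> carrier R \<Longrightarrow> y \<in> carrier R \<Longrightarrow> qadd R (canon R x) (canon R y) = canon R (x \<oplus> y)"
  unfolding canon_def by (simp add: qadd_frac one_regs)

lemma qmul_canon: "x \<in> carrier R \<Longrightarrow> y \<in> carrier R \<Longrightarrow> qmul R (canon R x) (canon R y) = canon R (x \<otimes> y)"
  unfolding canon_def by (simp add: qmul_frac one_regs)

lemma qmul_closed: "U \<in> fracs R \<Longrightarrow> V \<in> fracs R \<Longrightarrow> qmul R U V \<in> fracs R"
  by (elim fracs_cases) (simp add: qmul_frac frac_in mult_regs)

lemma qadd_closed: "U \<in> fracs R \<Longrightarrow> V \<in> fracs R \<Longrightarrow> qadd R U V \<in> fracs R"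
  by (elim fracs_cases) (simp add: qadd_frac frac_in mult_regs regs_carrier)

lemma qadd_zero: "U \<in> fracs R \<Longrightarrow> qadd R U (canon R \<zero>) = U"
  unfolding canon_def by (elim fracs_cases) (simp add: qadd_frac one_regs regs_carrier)

lemma qmul_zero: "U \<in> fracs R \<Longrightarrow> qmul R U (canon R \<zero>) = canon R \<zero>"
  unfolding canon_def
  by (elim fracs_cases) (simp add: qmul_frac one_regs regs_carrier mult_regs frac_eq_iff)

lemma qmul_distr:
  assumes "U1 \<in> fracs R" "X1 \<in> fracs R" "Y1 \<in> fracs R"
  shows "qmul R U1 (qadd R X1 Y1) = qadd R (qmul R U1 X1) (qmul R U1 Y1)"
proof -
  obtain e u where 1: "e \<in> carrier R" "u \<in> regs R" "U1 = frac R e u" using assms fracs_cases by metis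
  obtain a s where 2: "a \<in> carrier R" "s \<in> regs R" "X1 = frac R a s" using assms fracs_cases by metis
  obtain b t where 3: "b \<in> carrier R" "t \<in> regs R" "Y1 = frac R b t" using assms fracs_cases by metis
  have c: "u \<in> carrier R" "s \<in> carrier R" "t \<in> carrier R" using 1 2 3 regs_carrier by auto
  show ?thesis using 1 2 3 c
    by (simp add: qmul_frac qadd_frac mult_regs frac_eq_iff m_ac l_distr r_distr)
qed

lemma qmul_swap:
  assumes "U1 \<in> fracs R" "D1 \<in> fracs R" "X1 \<in> fracs R"
  shows "qmul R U1 (qmul R D1 X1) = qmul R D1 (qmul R U1 X1)"
proof -
  obtain e u where 1: "e \<in> carrier R" "u \<in> regs R" "U1 = frac R e u" using assms fracs_cases by metis
  obtain a s where 2: "a \<in> carrier R" "s \<in> regs R" "D1 = frac R a s" using assms fracs_cases by metis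
  obtain b t where 3: "b \<in> carrier R" "t \<in> regs R" "X1 = frac R b t" using assms fracs_cases by metis
  have c: "u \<in> carrier R" "s \<in> carrier R" "t \<in> carrier R" using 1 2 3 regs_carrier by auto
  show ?thesis using 1 2 3 c
    by (simp add: qmul_frac mult_regs m_lcomm)
qed

lemma qmul_canon_frac: "y \<in> carrier R \<Longrightarrow> w \<in> carrier R \<Longrightarrow> s \<in> regs R \<Longrightarrow>
    qmul R (canon R y) (frac R w s) = frac R (y \<otimes> w) s"
  unfolding canon_def by (simp add: qmul_frac one_regs regs_carrier)

lemma qadd_frac_same: "p \<in> carrier R \<Longrightarrow> q \<in> carrier R \<Longrightarrow> s \<in> regs R \<Longrightarrow>
    qadd R (frac R p s) (frac R q s) = frac R (p \<oplus> q) s"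
  using regs_carrier[of s]
  by (simp add: qadd_frac mult_regs frac_eq_iff m_ac l_distr r_distr)

lemma frac_cancel: "w \<in> carrier R \<Longrightarrow> s \<in> regs R \<Longrightarrow> frac R (s \<otimes> w) s = canon R w"
  unfolding canon_def using regs_carrier[of s]
  by (simp add: one_regs frac_eq_iff m_comm)

lemma frac_zero: "s \<in> regs R \<Longrightarrow> frac R \<zero> s = canon R \<zero>"
  unfolding canon_def using regs_carrier[of s]
  by (simp add: one_regs frac_eq_iff)

end


lemma amalg_ops:
  "(a, b) \<otimes>\<^bsub>amalg A B f J\<^esub> (c, d) = (a \<otimes>\<^bsub>A\<^esub> c, b \<otimes>\<^bsub>B\<^esub> d)"
  "(a, b) \<oplus>\<^bsub>amalg A B f J\<^esub> (c, d) = (a \<oplus>\<^bsub>A\<^esub> c, b \<oplus>\<^bsub>B\<^esub> d)"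
  "\<one>\<^bsub>amalg A B f J\<^esub> = (\<one>\<^bsub>A\<^esub>, \<one>\<^bsub>B\<^esub>)" "\<zero>\<^bsub>amalg A B f J\<^esub> = (\<zero>\<^bsub>A\<^esub>, \<zero>\<^bsub>B\<^esub>)"
  by (simp_all add: amalg_def RDirProd_def DirProd_def monoid.defs)

lemma RDirProd_ops:
  "(a, b) \<otimes>\<^bsub>RDirProd A B\<^esub> (c, d) = (a \<otimes>\<^bsub>A\<^esub> c, b \<otimes>\<^bsub>B\<^esub> d)"
  "(a, b) \<oplus>\<^bsub>RDirProd A B\<^esub> (c, d) = (a \<oplus>\<^bsub>A\<^esub> c, b \<oplus>\<^bsub>B\<^esub> d)"
  "\<one>\<^bsub>RDirProd A B\<^esub> = (\<one>\<^bsub>A\<^esub>, \<one>\<^bsub>B\<^esub>)" "\<zero>\<^bsub>RDirProd A B\<^esub> = (\<zero>\<^bsub>A\<^esub>, \<zero>\<^bsub>B\<^esub>)"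
  by (simp_all add: RDirProd_def DirProd_def monoid.defs)

lemma amalg_carrier: "(x, y) \<in> carrier (amalg A B f J) \<longleftrightarrow> x \<in> carrier A \<and> (\<exists>j \<in> J. y = f x \<oplus>\<^bsub>B\<^esub> j)"
  by (auto simp: amalg_def)

locale amal = A: cring A + B: cring B for A (structure) and B (structure) +
  fixes f J
  assumes hom: "f \<in> ring_hom A B" and J: "ideal J B"
begin

abbreviation "RR \<equiv> amalg A B f J"

lemma fc: "x \<in> carrier A \<Longrightarrow> f x \<in> carrier B"
  using hom by (auto simp: ring_hom_def)
lemma fmul: "x \<in> carrier A \<Longrightarrow> y \<in> carrier A \<Longrightarrow> f (x \<otimes>\<^bsub>A\<^esub> y) = f x \<otimes>\<^bsub>B\<^esub> f y"
  using hom by (auto simp: ring_hom_def)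
lemma fadd: "x \<in> carrier A \<Longrightarrow> y \<in> carrier A \<Longrightarrow> f (x \<oplus>\<^bsub>A\<^esub> y) = f x \<oplus>\<^bsub>B\<^esub> f y"
  using hom by (auto simp: ring_hom_def)
lemma fone: "f \<one>\<^bsub>A\<^esub> = \<one>\<^bsub>B\<^esub>"
  using hom by (auto simp: ring_hom_def)
lemma fzero: "f \<zero>\<^bsub>A\<^esub> = \<zero>\<^bsub>B\<^esub>"
  using hom A.ring_axioms B.ring_axioms ring_hom_zero by blast
lemma fneg: "x \<in> carrier A \<Longrightarrow> f (\<ominus>\<^bsub>A\<^esub> x) = \<ominus>\<^bsub>B\<^esub> f x"
proof -
  assume x: "x \<in> carrier A"
  have "f (\<ominus>\<^bsub>A\<^esub> x) \<oplus>\<^bsub>B\<^esub> f x = \<zero>\<^bsub>B\<^esub>"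
    using x by (simp add: fadd[symmetric] A.l_neg fzero)
  thus ?thesis using x fc by (simp add: B.minus_equality)
qed

lemma Jc: "j \<in> J \<Longrightarrow> j \<in> carrier B"
  by (rule ideal.Icarr[OF J])

lemma P: "ring (RDirProd A B)"
  by (rule RDirProd_ring) (auto simp: A.ring_axioms B.ring_axioms)

lemma sub: "subring (carrier RR) (RDirProd A B)"
proof (rule ring.subringI[OF P])
  show "carrier RR \<subseteq> carrier (RDirProd A B)"
    by (auto simp: amalg_def RDirProd_carrier Jc fc)
  show "\<one>\<^bsub>RDirProd A B\<^esub> \<in> carrier RR"
    unfolding RDirProd_ops amalg_carrier
    by (intro conjI bexI[of _ "\<zero>\<^bsub>B\<^esub>"]) (auto simp: fone additive_subgroup.zero_closed[OF ideal.axioms(1)[OF J]])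
  fix h assume h: "h \<in> carrier RR"
  then obtain x j where xj: "h = (x, f x \<oplus>\<^bsub>B\<^esub> j)" "x \<in> carrier A" "j \<in> J"
    by (auto simp: amalg_def)
  have e: "\<ominus>\<^bsub>RDirProd A B\<^esub> h = (\<ominus>\<^bsub>A\<^esub> x, \<ominus>\<^bsub>B\<^esub> (f x \<oplus>\<^bsub>B\<^esub> j))"
    unfolding xj(1)
    by (rule abelian_group.minus_equality[OF ring.is_abelian_group[OF P]]) (use xj fc Jc in \<open>auto simp: RDirProd_ops RDirProd_carrier A.l_neg B.l_neg\<close>)
  show "\<ominus>\<^bsub>RDirProd A B\<^esub> h \<in> carrier RR"
    unfolding e amalg_carrier
    by (intro conjI bexI[of _ "\<ominus>\<^bsub>B\<^esub> j"])
       (use xj fc Jc in \<open>auto simp: fneg B.minus_add additive_subgroup.a_inv_closed[OF ideal.axioms(1)[OF J]]\<close>)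
next
  fix h1 h2 assume h1: "h1 \<in> carrier RR" and h2: "h2 \<in> carrier RR"
  obtain x j where xj: "h1 = (x, f x \<oplus>\<^bsub>B\<^esub> j)" "x \<in> carrier A" "j \<in> J"
    using h1 by (auto simp: amalg_def)
  obtain y k where yk: "h2 = (y, f y \<oplus>\<^bsub>B\<^esub> k)" "y \<in> carrier A" "k \<in> J"
    using h2 by (auto simp: amalg_def)
  have jc: "j \<in> carrier B" "k \<in> carrier B" using xj yk Jc by auto
  have fxy: "f x \<in> carrier B" "f y \<in> carrier B" using xj yk fc by auto
  have m: "(f x \<oplus>\<^bsub>B\<^esub> j) \<otimes>\<^bsub>B\<^esub> (f y \<oplus>\<^bsub>B\<^esub> k) = f (x \<otimes>\<^bsub>A\<^esub> y) \<oplus>\<^bsub>B\<^esub> (f x \<otimes>\<^bsub>B\<^esub> k \<oplus>\<^bsub>B\<^esub> j \<otimes>\<^bsub>B\<^esub> (f y \<oplus>\<^bsub>B\<^esub> k))"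
    using jc fxy xj yk by (simp add: fmul B.l_distr B.r_distr B.a_ac)
  have mj: "f x \<otimes>\<^bsub>B\<^esub> k \<oplus>\<^bsub>B\<^esub> j \<otimes>\<^bsub>B\<^esub> (f y \<oplus>\<^bsub>B\<^esub> k) \<in> J"
    using J xj yk jc fxy
    by (meson B.add.m_closed additive_subgroup.a_closed ideal.I_l_closed ideal.I_r_closed ideal_def)
  show "h1 \<otimes>\<^bsub>RDirProd A B\<^esub> h2 \<in> carrier RR"
    unfolding xj(1) yk(1) RDirProd_ops amalg_carrier using m mj xj yk by auto
  have a: "(f x \<oplus>\<^bsub>B\<^esub> j) \<oplus>\<^bsub>B\<^esub> (f y \<oplus>\<^bsub>B\<^esub> k) = f (x \<oplus>\<^bsub>A\<^esub> y) \<oplus>\<^bsub>B\<^esub> (j \<oplus>\<^bsub>B\<^esub> k)"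
    using jc fxy xj yk by (simp add: fadd B.a_ac)
  have aj: "j \<oplus>\<^bsub>B\<^esub> k \<in> J"
    using J xj yk by (meson additive_subgroup.a_closed ideal_def)
  show "h1 \<oplus>\<^bsub>RDirProd A B\<^esub> h2 \<in> carrier RR"
    unfolding xj(1) yk(1) RDirProd_ops amalg_carrier using a aj xj yk by auto
qed

lemma RR_elem0: "r \<in> carrier RR \<Longrightarrow> fst r \<in> carrier A \<and> snd r \<in> carrier B"
  by (auto simp: amalg_def fc Jc)

lemma RR_cring: "cring RR"
proof -
  have "subcring (carrier RR) (RDirProd A B)"
  proof (rule ring.subcringI[OF P sub])
    fix h1 h2 assume h: "h1 \<in> carrier RR" "h2 \<in> carrier RR"
    obtain x1 y1 where 1: "h1 = (x1, y1)" by (cases h1)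
    obtain x2 y2 where 2: "h2 = (x2, y2)" by (cases h2)
    have c: "x1 \<in> carrier A" "x2 \<in> carrier A" "y1 \<in> carrier B" "y2 \<in> carrier B"
      using RR_elem0[OF h(1)] RR_elem0[OF h(2)] 1 2 by auto
    show "h1 \<otimes>\<^bsub>RDirProd A B\<^esub> h2 = h2 \<otimes>\<^bsub>RDirProd A B\<^esub> h1"
      unfolding 1 2 RDirProd_ops using c by (simp add: A.m_comm B.m_comm)
  qed
  hence "cring ((RDirProd A B)\<lparr>carrier := carrier RR\<rparr>)"
    by (rule iffD1[OF ring.subcring_iff[OF P subringE(1)[OF sub]]])
  moreover have "(RDirProd A B)\<lparr>carrier := carrier RR\<rparr> = RR"
  proof -
    have c: "carrier RR = {(a, f a \<oplus>\<^bsub>B\<^esub> j) | a j. a \<in> carrier A \<and> j \<in> J}"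
      by (simp add: amalg_def)
    show ?thesis by (subst c) (simp only: amalg_def)
  qed
  ultimately show ?thesis by (simp only:)
qed

definition iota where "iota x = (x, f x)"

lemma iota_carrier: "x \<in> carrier A \<Longrightarrow> (x, f x) \<in> carrier RR"
  unfolding amalg_carrier
  by (intro conjI bexI[of _ "\<zero>\<^bsub>B\<^esub>"]) (auto simp: fc additive_subgroup.zero_closed[OF ideal.axioms(1)[OF J]])

lemma iota_carrier': "x \<in> carrier A \<Longrightarrow> iota x \<in> carrier RR"
  unfolding iota_def by (rule iota_carrier)

lemma RR_elem: "r \<in> carrier RR \<Longrightarrow> fst r \<in> carrier A \<and> snd r \<in> carrier B"
  by (auto simp: amalg_def fc Jc)

lemma iota_hom: "iota \<in> ring_hom A RR"
  by (rule ring_hom_memI) (auto simp: iota_carrier iota_def amalg_ops fmul fadd fone)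

lemma fst_hom: "fst \<in> ring_hom RR A"
proof (rule ring_hom_memI)
  fix x y assume "x \<in> carrier RR" "y \<in> carrier RR"
  thus "fst (x \<otimes>\<^bsub>RR\<^esub> y) = fst x \<otimes>\<^bsub>A\<^esub> fst y" "fst (x \<oplus>\<^bsub>RR\<^esub> y) = fst x \<oplus>\<^bsub>A\<^esub> fst y"
    by (cases x, cases y, simp only: amalg_ops fst_conv)+
qed (auto simp: RR_elem amalg_ops)

lemma iota_regs: assumes "a \<in> regs A" "f a \<in> regs B" shows "iota a \<in> regs RR"
  unfolding regs_def
proof (intro CollectI conjI ballI impI)
  have ac: "a \<in> carrier A" using assms by (simp add: regs_def)
  show "iota a \<in> carrier RR" using iota_carrier' ac .
  fix r assume r: "r \<in> carrier RR" and e: "iota a \<otimes>\<^bsub>RR\<^esub> r = \<zero>\<^bsub>RR\<^esub>"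
  obtain x j where xj: "r = (x, f x \<oplus>\<^bsub>B\<^esub> j)" "x \<in> carrier A" "j \<in> J"
    using r by (auto simp: amalg_def)
  have e1: "a \<otimes>\<^bsub>A\<^esub> x = \<zero>\<^bsub>A\<^esub>" and e2: "f a \<otimes>\<^bsub>B\<^esub> (f x \<oplus>\<^bsub>B\<^esub> j) = \<zero>\<^bsub>B\<^esub>"
    using e unfolding xj(1) iota_def amalg_ops by auto
  have x0: "x = \<zero>\<^bsub>A\<^esub>" using e1 assms(1) xj(2) by (simp add: regs_def)
  have "f a \<otimes>\<^bsub>B\<^esub> j = \<zero>\<^bsub>B\<^esub>" using e2 x0 fzero Jc xj(3) by simp
  hence "j = \<zero>\<^bsub>B\<^esub>" using assms(2) Jc xj(3) by (simp add: regs_def)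
  thus "r = \<zero>\<^bsub>RR\<^esub>" using xj x0 fzero by (simp add: amalg_ops)
qed

end


inductive_set prodset :: "('a, 'm) ring_scheme \<Rightarrow> 'a set \<Rightarrow> 'a set \<Rightarrow> 'a set"
  for R I L where
  pz: "\<zero>\<^bsub>R\<^esub> \<in> prodset R I L"
| ps: "p \<in> prodset R I L \<Longrightarrow> y \<in> I \<Longrightarrow> z \<in> L \<Longrightarrow> y \<otimes>\<^bsub>R\<^esub> z \<oplus>\<^bsub>R\<^esub> p \<in> prodset R I L"

definition Lset :: "('a, 'm) ring_scheme \<Rightarrow> 'a \<Rightarrow> 'a set \<Rightarrow> 'a set" where
  "Lset R a I = {z \<in> carrier R. \<forall>x \<in> I. \<exists>w \<in> carrier R. x \<otimes>\<^bsub>R\<^esub> z = a \<otimes>\<^bsub>R\<^esub> w}"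

context cring
begin

lemma prodset_carrier: "p \<in> prodset R I L \<Longrightarrow> I \<subseteq> carrier R \<Longrightarrow> L \<subseteq> carrier R \<Longrightarrow> p \<in> carrier R"
  by (induction rule: prodset.induct) auto

lemma qsum_nil: "qsum R [] = canon R \<zero>"
  by (simp add: qsum_def)

lemma qsum_cons: "qsum R (x # xs) = qadd R x (qsum R xs)"
  by (simp add: qsum_def)

lemma core:
  assumes I: "ideal I R" and a: "a \<in> regs R" and aP: "a \<in> prodset R I (Lset R a I)"
  shows "invertible_ideal R I"
proof -
  have Ic: "\<And>x. x \<in> I \<Longrightarrow> x \<in> carrier R" using ideal.Icarr[OF I] .
  have ac: "a \<in> carrier R" using a regs_carrier by simp
  define M where "M = {u \<in> fracs R. \<forall>x \<in> I. qmul R (canon R x) u \<in> canon R ` carrier R}"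
  define g where "g = (\<lambda>(i, x). qmul R (canon R i) x)"
  have "frac_submodule R M"
    unfolding frac_submodule_def
  proof (intro conjI ballI)
    show "M \<subseteq> fracs R" unfolding M_def by auto
    show "canon R \<zero> \<in> M" unfolding M_def
      by (auto simp: canon_in qmul_zero Ic)
    fix u v assume u: "u \<in> M" and v: "v \<in> M"
    show "qadd R u v \<in> M" unfolding M_def
    proof (intro CollectI conjI ballI)
      show "qadd R u v \<in> fracs R" using u v qadd_closed unfolding M_def by auto
      fix x assume x: "x \<in> I"
      obtain r1 where r1: "r1 \<in> carrier R" "qmul R (canon R x) u = canon R r1" using u x unfolding M_def by auto
      obtain r2 where r2: "r2 \<in> carrier R" "qmul R (canon R x) v = canon R r2" using v x unfolding M_def by auto
      have "qmul R (canon R x) (qadd R u v) = canon R (r1 \<oplus> r2)"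
        using u v x r1 r2 Ic by (simp add: qmul_distr canon_in M_def qadd_canon)
      thus "qmul R (canon R x) (qadd R u v) \<in> canon R ` carrier R" using r1 r2 by auto
    qed
  next
    fix r u assume r: "r \<in> carrier R" and u: "u \<in> M"
    show "qmul R (canon R r) u \<in> M" unfolding M_def
    proof (intro CollectI conjI ballI)
      show "qmul R (canon R r) u \<in> fracs R" using u r qmul_closed canon_in unfolding M_def by auto
      fix x assume x: "x \<in> I"
      obtain r1 where r1: "r1 \<in> carrier R" "qmul R (canon R x) u = canon R r1" using u x unfolding M_def by auto
      have "qmul R (canon R x) (qmul R (canon R r) u) = canon R (r \<otimes> r1)"
        using u x r r1 Ic by (simp add: qmul_swap[of "canon R x"] canon_in M_def qmul_canon)
      thus "qmul R (canon R x) (qmul R (canon R r) u) \<in> canon R ` carrier R" using r r1 by auto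
    qed
  qed
  moreover have "ideal_frac_prod R I M = canon R ` carrier R"
  proof
    have "qsum R (map g ps) \<in> canon R ` carrier R" if "set ps \<subseteq> I \<times> M" for ps
      using that
    proof (induction ps)
      case Nil
      then show ?case by (auto simp: qsum_nil)
    next
      case (Cons q ps)
      obtain i u where q: "q = (i, u)" by (cases q)
      have iu: "i \<in> I" "u \<in> M" using Cons.prems q by auto
      obtain r1 where r1: "r1 \<in> carrier R" "g q = canon R r1" using iu unfolding M_def g_def q by auto
      obtain r2 where r2: "r2 \<in> carrier R" "qsum R (map g ps) = canon R r2" using Cons by auto
      have "qsum R (map g (q # ps)) = canon R (r1 \<oplus> r2)"
        using r1 r2 by (simp add: qsum_cons qadd_canon)
      thus ?case using r1 r2 by auto
    qed
    thus "ideal_frac_prod R I M \<subseteq> canon R ` carrier R"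
      unfolding ideal_frac_prod_def g_def by auto
  next
    have L: "Lset R a I \<subseteq> carrier R" unfolding Lset_def by auto
    have "\<forall>r \<in> carrier R. \<exists>ps. set ps \<subseteq> I \<times> M \<and> qsum R (map g ps) = frac R (p \<otimes> r) a"
      if "p \<in> prodset R I (Lset R a I)" for p
      using that
    proof (induction rule: prodset.induct)
      case pz
      show ?case
      proof
        fix r assume r: "r \<in> carrier R"
        have "qsum R (map g []) = frac R (\<zero> \<otimes> r) a" using r a by (simp add: qsum_nil frac_zero)
        thus "\<exists>ps. set ps \<subseteq> I \<times> M \<and> qsum R (map g ps) = frac R (\<zero> \<otimes> r) a" by (intro exI[of _ "[]"]) simp
      qed
    next
      case (ps p y z)
      have pc: "p \<in> carrier R" using prodset_carrier[OF ps.hyps(1)] Ic L by auto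
      have yc: "y \<in> carrier R" using Ic ps.hyps(2) by simp
      have zc: "z \<in> carrier R" using L ps.hyps(3) by auto
      show ?case
      proof
        fix r assume r: "r \<in> carrier R"
        obtain l where l: "set l \<subseteq> I \<times> M" "qsum R (map g l) = frac R (p \<otimes> r) a"
          using ps.IH r by blast
        have zM: "frac R (z \<otimes> r) a \<in> M" unfolding M_def
        proof (intro CollectI conjI ballI)
          show "frac R (z \<otimes> r) a \<in> fracs R" using zc r a by (simp add: frac_in)
          fix x assume x: "x \<in> I"
          obtain w where w: "w \<in> carrier R" "x \<otimes> z = a \<otimes> w"
            using ps.hyps(3) x unfolding Lset_def by auto
          have "qmul R (canon R x) (frac R (z \<otimes> r) a) = frac R (x \<otimes> (z \<otimes> r)) a"
            using x Ic zc r a by (simp add: qmul_canon_frac)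
          also have "x \<otimes> (z \<otimes> r) = a \<otimes> (w \<otimes> r)"
            using w x Ic zc r ac by (metis m_assoc)
          also have "frac R (a \<otimes> (w \<otimes> r)) a = canon R (w \<otimes> r)"
            using w r a by (simp add: frac_cancel)
          finally show "qmul R (canon R x) (frac R (z \<otimes> r) a) \<in> canon R ` carrier R"
            using w r by auto
        qed
        have "qsum R (map g ((y, frac R (z \<otimes> r) a) # l))
            = qadd R (frac R (y \<otimes> (z \<otimes> r)) a) (frac R (p \<otimes> r) a)"
          using l yc zc r a by (simp add: qsum_cons g_def qmul_canon_frac)
        also have "\<dots> = frac R (y \<otimes> (z \<otimes> r) \<oplus> p \<otimes> r) a"
          using yc zc r a pc by (simp add: qadd_frac_same)
        also have "y \<otimes> (z \<otimes> r) \<oplus> p \<otimes> r = (y \<otimes> z \<oplus> p) \<otimes> r"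
          using yc zc r pc by (simp add: l_distr m_assoc)
        finally have "qsum R (map g ((y, frac R (z \<otimes> r) a) # l)) = frac R ((y \<otimes> z \<oplus> p) \<otimes> r) a" .
        moreover have "set ((y, frac R (z \<otimes> r) a) # l) \<subseteq> I \<times> M" using l zM ps.hyps(2) by auto
        ultimately show "\<exists>ps. set ps \<subseteq> I \<times> M \<and> qsum R (map g ps) = frac R ((y \<otimes> z \<oplus> p) \<otimes> r) a"
          by blast
      qed
    qed
    from this[OF aP]
    show "canon R ` carrier R \<subseteq> ideal_frac_prod R I M"
    proof (intro subsetI)
      fix c assume h: "\<forall>r \<in> carrier R. \<exists>ps. set ps \<subseteq> I \<times> M \<and> qsum R (map g ps) = frac R (a \<otimes> r) a"
        and c: "c \<in> canon R ` carrier R"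
      obtain r where r: "r \<in> carrier R" "c = canon R r" using c by auto
      obtain l where l: "set l \<subseteq> I \<times> M" "qsum R (map g l) = frac R (a \<otimes> r) a" using h r by blast
      have "c = qsum R (map g l)" using l r a by (simp add: frac_cancel)
      thus "c \<in> ideal_frac_prod R I M" unfolding ideal_frac_prod_def g_def using l(1) by blast
    qed
  qed
  ultimately show ?thesis unfolding invertible_ideal_def by blast
qed

end


context amal
begin

lemma key:
  assumes S: "S \<subseteq> carrier A" and aI: "a \<in> genideal A S" and areg: "a \<in> regs A" and fareg: "f a \<in> regs B"
    and inv: "invertible_ideal RR (genideal RR (iota ` S))"
  shows "a \<in> prodset A (genideal A S) (Lset A a (genideal A S))"
proof -
  interpret R: cring RR by (rule RR_cring)
  define I where "I = genideal A S"
  define I' where "I' = genideal RR (iota ` S)"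
  have iS: "iota ` S \<subseteq> carrier RR" using S iota_carrier' by auto
  have I'i: "ideal I' RR" unfolding I'_def by (rule R.genideal_ideal[OF iS])
  have Ii: "ideal I A" unfolding I_def by (rule A.genideal_ideal[OF S])
  have hrA: "ring_hom_ring A RR iota" by (rule ring_hom_ringI2[OF A.ring_axioms R.ring_axioms iota_hom])
  have hrR: "ring_hom_ring RR A fst" by (rule ring_hom_ringI2[OF R.ring_axioms A.ring_axioms fst_hom])
  have iI: "iota x \<in> I'" if "x \<in> I" for x
  proof -
    have "I \<subseteq> {x \<in> carrier A. iota x \<in> I'}"
      unfolding I_def
    proof (rule A.genideal_minimal[OF ring_hom_ring.ideal_vimage[OF hrA I'i]])
      show "S \<subseteq> {x \<in> carrier A. iota x \<in> I'}"
        using S R.genideal_self[OF iS] unfolding I'_def by auto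
    qed
    thus ?thesis using that by auto
  qed
  have fI: "fst r \<in> I" if "r \<in> I'" for r
  proof -
    have "I' \<subseteq> {r \<in> carrier RR. fst r \<in> I}"
      unfolding I'_def
    proof (rule R.genideal_minimal[OF ring_hom_ring.ideal_vimage[OF hrR Ii]])
      show "iota ` S \<subseteq> {r \<in> carrier RR. fst r \<in> I}"
        using S A.genideal_self[OF S] iota_carrier' unfolding I_def by (auto simp: iota_def)
    qed
    thus ?thesis using that by auto
  qed
  have I'c: "\<And>r. r \<in> I' \<Longrightarrow> r \<in> carrier RR" using ideal.Icarr[OF I'i] .
  have Ic: "\<And>r. r \<in> I \<Longrightarrow> r \<in> carrier A" using ideal.Icarr[OF Ii] .
  have ac: "a \<in> carrier A" using areg by (simp add: regs_def)
  have iac: "iota a \<in> carrier RR" using iota_carrier' ac .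
  obtain M where M: "frac_submodule RR M" "ideal_frac_prod RR I' M = canon RR ` carrier RR"
    using inv unfolding invertible_ideal_def I'_def by blast
  have Mf: "\<And>m. m \<in> M \<Longrightarrow> m \<in> fracs RR" using M(1) unfolding frac_submodule_def by auto
  define g where "g = (\<lambda>(i, x). qmul RR (canon RR i) x)"
  have one: "qmul RR (canon RR x) m \<in> canon RR ` carrier RR" if "x \<in> I'" "m \<in> M" for x m
  proof -
    have xc: "x \<in> carrier RR" using I'c that(1) .
    have mf: "m \<in> fracs RR" using Mf that(2) .
    have qf: "qmul RR (canon RR x) m \<in> fracs RR" using R.qmul_closed[OF R.canon_in[OF xc] mf] .
    have "qsum RR (map g [(x, m)]) = qadd RR (qmul RR (canon RR x) m) (canon RR \<zero>\<^bsub>RR\<^esub>)"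
      by (simp add: g_def R.qsum_cons R.qsum_nil)
    also have "\<dots> = qmul RR (canon RR x) m" by (rule R.qadd_zero[OF qf])
    finally have e: "qsum RR (map g [(x, m)]) = qmul RR (canon RR x) m" .
    have "set [(x, m)] \<subseteq> I' \<times> M" using that by simp
    hence "qsum RR (map g [(x, m)]) \<in> ideal_frac_prod RR I' M"
      unfolding ideal_frac_prod_def g_def by (intro CollectI exI[of _ "[(x, m)]"]) simp
    with e have "qmul RR (canon RR x) m \<in> ideal_frac_prod RR I' M" by simp
    thus ?thesis using M(2) by simp
  qed
  define c where "c = canon RR (iota a)"
  have cf: "c \<in> fracs RR" unfolding c_def using R.canon_in iac .
  have aI': "iota a \<in> I'" using iI aI I_def by simp
  have cm: "\<exists>r \<in> carrier RR. qmul RR c m = canon RR r \<and> fst r \<in> Lset A a I" if m: "m \<in> M" for m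
  proof -
    obtain r where r: "r \<in> carrier RR" "qmul RR c m = canon RR r" using one[OF aI' m] unfolding c_def by auto
    have "fst r \<in> Lset A a I" unfolding Lset_def
    proof (intro CollectI conjI ballI)
      show "fst r \<in> carrier A" using RR_elem[OF r(1)] by simp
      fix x assume x: "x \<in> I"
      have ix: "iota x \<in> I'" using iI x .
      obtain r' where r': "r' \<in> carrier RR" "qmul RR (canon RR (iota x)) m = canon RR r'" using one[OF ix m] by auto
      have "canon RR (iota x \<otimes>\<^bsub>RR\<^esub> r) = qmul RR (canon RR (iota x)) (canon RR r)"
        using r I'c ix by (simp add: R.qmul_canon)
      also have "\<dots> = qmul RR (canon RR (iota x)) (qmul RR c m)" using r by simp
      also have "\<dots> = qmul RR c (qmul RR (canon RR (iota x)) m)"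
        using R.qmul_swap cf Mf[OF m] R.canon_in I'c ix by metis
      also have "\<dots> = canon RR (iota a \<otimes>\<^bsub>RR\<^esub> r')" using r' iac c_def by (simp add: R.qmul_canon)
      finally have "iota x \<otimes>\<^bsub>RR\<^esub> r = iota a \<otimes>\<^bsub>RR\<^esub> r'"
        using R.canon_inj r r' iac I'c ix by (meson R.m_closed)
      hence "fst (iota x \<otimes>\<^bsub>RR\<^esub> r) = fst (iota a \<otimes>\<^bsub>RR\<^esub> r')" by simp
      hence "x \<otimes>\<^bsub>A\<^esub> fst r = a \<otimes>\<^bsub>A\<^esub> fst r'"
        using ring_hom_mult[OF fst_hom] r r' iac I'c ix by (simp add: iota_def)
      moreover have "fst r' \<in> carrier A" using RR_elem[OF r'(1)] by simp
      ultimately show "\<exists>w \<in> carrier A. x \<otimes>\<^bsub>A\<^esub> fst r = a \<otimes>\<^bsub>A\<^esub> w" by blast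
    qed
    thus ?thesis using r by blast
  qed
  have ind: "\<exists>t \<in> carrier RR. qmul RR c (qsum RR (map g ps)) = canon RR t \<and> fst t \<in> prodset A I (Lset A a I)"
    if "set ps \<subseteq> I' \<times> M" for ps
    using that
  proof (induction ps)
    case Nil
    have "qmul RR c (qsum RR (map g [])) = canon RR \<zero>\<^bsub>RR\<^esub>" using cf by (simp add: R.qsum_nil R.qmul_zero)
    moreover have "fst \<zero>\<^bsub>RR\<^esub> = \<zero>\<^bsub>A\<^esub>" by (simp add: amalg_ops)
    ultimately show ?case using prodset.pz[of A I "Lset A a I"] by (metis R.zero_closed)
  next
    case (Cons q ps)
    obtain x m where q: "q = (x, m)" by (cases q)
    have xm: "x \<in> I'" "m \<in> M" using Cons.prems q by auto
    obtain t where t: "t \<in> carrier RR" "qmul RR c (qsum RR (map g ps)) = canon RR t" "fst t \<in> prodset A I (Lset A a I)"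
      using Cons by auto
    obtain r where r: "r \<in> carrier RR" "qmul RR c m = canon RR r" "fst r \<in> Lset A a I" using cm xm by blast
    have qf: "qsum RR (map g ps) \<in> fracs RR"
    proof -
      have "qmul RR c (qsum RR (map g ps)) \<in> fracs RR" using t R.canon_in by simp
      have "\<forall>l. set l \<subseteq> I' \<times> M \<longrightarrow> qsum RR (map g l) \<in> fracs RR"
      proof
        fix l show "set l \<subseteq> I' \<times> M \<longrightarrow> qsum RR (map g l) \<in> fracs RR"
          by (induction l) (auto simp: R.qsum_nil R.qsum_cons g_def R.canon_in R.qadd_closed R.qmul_closed I'c Mf)
      qed
      thus ?thesis using Cons.prems by auto
    qed
    have xc: "x \<in> carrier RR" using I'c xm by simp
    have "qmul RR c (qsum RR (map g (q # ps))) = qadd RR (qmul RR c (qmul RR (canon RR x) m)) (canon RR t)"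
      using q t qf cf xc Mf[OF xm(2)]
      by (simp add: R.qsum_cons g_def R.qmul_distr R.qmul_closed R.canon_in)
    also have "qmul RR c (qmul RR (canon RR x) m) = canon RR (x \<otimes>\<^bsub>RR\<^esub> r)"
      using R.qmul_swap[OF cf R.canon_in[OF xc] Mf[OF xm(2)]] r xc by (simp add: R.qmul_canon)
    also have "qadd RR (canon RR (x \<otimes>\<^bsub>RR\<^esub> r)) (canon RR t) = canon RR (x \<otimes>\<^bsub>RR\<^esub> r \<oplus>\<^bsub>RR\<^esub> t)"
      using xc r t by (simp add: R.qadd_canon)
    finally have e: "qmul RR c (qsum RR (map g (q # ps))) = canon RR (x \<otimes>\<^bsub>RR\<^esub> r \<oplus>\<^bsub>RR\<^esub> t)" .
    have "fst (x \<otimes>\<^bsub>RR\<^esub> r \<oplus>\<^bsub>RR\<^esub> t) = fst x \<otimes>\<^bsub>A\<^esub> fst r \<oplus>\<^bsub>A\<^esub> fst t"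
      using ring_hom_mult[OF fst_hom] ring_hom_add[OF fst_hom] xc r t by simp
    moreover have "fst x \<otimes>\<^bsub>A\<^esub> fst r \<oplus>\<^bsub>A\<^esub> fst t \<in> prodset A I (Lset A a I)"
      by (rule prodset.ps[OF t(3) fI[OF xm(1)] r(3)])
    ultimately show ?case using e xc r t by (metis R.m_closed R.add.m_closed)
  qed
  have "canon RR \<one>\<^bsub>RR\<^esub> \<in> ideal_frac_prod RR I' M" using M(2) by simp
  then obtain ps where ps: "set ps \<subseteq> I' \<times> M" "qsum RR (map g ps) = canon RR \<one>\<^bsub>RR\<^esub>"
    unfolding ideal_frac_prod_def g_def by blast
  obtain t where t: "t \<in> carrier RR" "qmul RR c (qsum RR (map g ps)) = canon RR t" "fst t \<in> prodset A I (Lset A a I)"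
    using ind[OF ps(1)] by blast
  have "canon RR t = canon RR (iota a)"
    using t(2) ps(2) iac unfolding c_def by (simp add: R.qmul_canon)
  hence "t = iota a" using R.canon_inj t(1) iac by blast
  hence "fst t = a" by (simp add: iota_def)
  thus ?thesis using t(3) I_def by simp
qed

end

context amal
begin

lemma iota_genideal:
  assumes S: "S \<subseteq> carrier A" and x: "x \<in> genideal A S"
  shows "iota x \<in> genideal RR (iota ` S)"
proof -
  interpret R: cring RR by (rule RR_cring)
  have iS: "iota ` S \<subseteq> carrier RR" using S iota_carrier' by auto
  have I'i: "ideal (genideal RR (iota ` S)) RR" by (rule R.genideal_ideal[OF iS])
  have hrA: "ring_hom_ring A RR iota" by (rule ring_hom_ringI2[OF A.ring_axioms R.ring_axioms iota_hom])
  have "genideal A S \<subseteq> {x \<in> carrier A. iota x \<in> genideal RR (iota ` S)}"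
  proof (rule A.genideal_minimal[OF ring_hom_ring.ideal_vimage[OF hrA I'i]])
    show "S \<subseteq> {x \<in> carrier A. iota x \<in> genideal RR (iota ` S)}"
      using S R.genideal_self[OF iS] by auto
  qed
  thus ?thesis using x by auto
qed

end

theorem lemma2p5:
  fixes A :: "('a, 'm) ring_scheme" and B :: "('b, 'n) ring_scheme"
    and f :: "'a \<Rightarrow> 'b" and J :: "'b set"
  assumes "cring A" and "cring B"
    and "f \<in> ring_hom A B"
    and "ideal J B" and "J \<noteq> carrier B"
    and "f ` regs A \<subseteq> regs B"
    and "prufer_ring (amalg A B f J)"
  shows "prufer_ring A"
proof -
  interpret amal A B f J
    using assms by (simp add: amal_def amal_axioms_def)
  interpret R: cring "amalg A B f J" by (rule RR_cring)
  show ?thesis unfolding prufer_ring_def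
  proof (intro allI impI)
    fix I assume h: "ideal I A \<and> (\<exists>S. finite S \<and> S \<subseteq> carrier A \<and> I = genideal A S) \<and> I \<inter> regs A \<noteq> {}"
    then obtain S a where S: "finite S" "S \<subseteq> carrier A" "I = genideal A S" and a: "a \<in> I" "a \<in> regs A"
      by blast
    have Ii: "ideal I A" using h by blast
    have fa: "f a \<in> regs B" using assms(6) a by auto
    have iS: "iota ` S \<subseteq> carrier (amalg A B f J)" using S iota_carrier' by auto
    have ia: "iota a \<in> genideal (amalg A B f J) (iota ` S)" using iota_genideal S a by simp
    have ir: "iota a \<in> regs (amalg A B f J)" using iota_regs[OF a(2) fa] .
    have "ideal (genideal (amalg A B f J) (iota ` S)) (amalg A B f J) \<and>
        (\<exists>S'. finite S' \<and> S' \<subseteq> carrier (amalg A B f J) \<and> genideal (amalg A B f J) (iota ` S) = genideal (amalg A B f J) S')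
        \<and> genideal (amalg A B f J) (iota ` S) \<inter> regs (amalg A B f J) \<noteq> {}"
      using R.genideal_ideal[OF iS] iS S(1) ia ir by blast
    hence inv: "invertible_ideal (amalg A B f J) (genideal (amalg A B f J) (iota ` S))"
      using assms(7) unfolding prufer_ring_def by blast
    have "a \<in> prodset A (genideal A S) (Lset A a (genideal A S))"
      by (rule key[OF S(2) _ a(2) fa inv]) (use S a in simp)
    thus "invertible_ideal A I" using A.core[OF Ii a(2)] S(3) by simp
  qed
qed

end
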